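(* Fix $k\ge2$, $c>0$ and $\zeta_n\in(0,1]$ with $\limsup_n\zeta_n(k-1)c^{k-1}<e$. Let $G=G_n$ be a sequence of asymptotically tree-like, approximately regular $k$-uniform hypergraphs with maximum degree $\Delta$, and let $\mathbf x^\ast$ be the unique fixed point of $F^{G}_{c,\zeta_n}$. Then, uniformly in $v\in V(G)$, $$x_v^\ast=\left(\frac{W((k-1)c^{k-1}\zeta_n)}{(k-1)\zeta_n}\right)^{\frac1{k-1}}+o(1).$$
   Context: Hypergraphs are simple. For a hypergraph $G$ and $S\subseteq V(G)$, $d_G(S)=|\{e\in E(G):S\subseteq e\}|$, $\Delta_\ell(G)=\max_{|S|=\ell}d_G(S)$, $\Delta(G)=\Delta_1(G)$ the maximum degree, $\delta(G)$ the minimum degree, and $\Gamma(G)$ is the maximum over distinct $v,v'$ of the number of $(k-1)$-sets $S$ with $S\cup\{v\},S\cup\{v'\}\in E(G)$. A sequence $(G_n)$ of $k$-uniform hypergraphs is asymptotically tree-like if, with $G=G_n$, $\Delta=\Delta(G)$, as $n\to\infty$: (1) $\Delta\to\infty$; (2) $\Delta_\ell(G)=o(\Delta^{\frac{k-\ell}{k-1}})$ for each $\ell\in\{2,\dots,k-1\}$; (3) $\Gamma(G)=o(\Delta)$; (4) $|E(G)|/|V(G)|=\Omega(\Delta)$. It is approximately regular if also $\delta(G)=(1-o(1))\Delta(G)$. $(F^G_{c,\zeta}(\mathbf x))_v=c\exp\left(-\frac{\zeta}{\Delta}\sum_{e\ni v}\prod_{u\in e\setminus\{v\}}x_u\right)$.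 $W$ is the Lambert $W$ function. *)

theory Defs
  imports "HOL-Analysis.Analysis" "HOL-Library.Landau_Symbols"
begin

definition uniform_hypergraph :: "nat \<Rightarrow> 'a set \<Rightarrow> 'a set set \<Rightarrow> bool" where
  "uniform_hypergraph k V E \<longleftrightarrow> finite V \<and> (\<forall>e\<in>E. e \<subseteq> V \<and> card e = k)"

definition hdeg :: "'a set set \<Rightarrow> 'a set \<Rightarrow> nat" where
  "hdeg E S = card {e \<in> E. S \<subseteq> e}"

definition codeg_max :: "'a set \<Rightarrow> 'a set set \<Rightarrow> nat \<Rightarrow> nat" where
  "codeg_max V E l = Max {hdeg E S | S. S \<subseteq> V \<and> card S = l}"

definition max_degree :: "'a set \<Rightarrow> 'a set set \<Rightarrow> nat" where
  "max_degree V E = Max ((\<lambda>v. hdeg E {v}) ` V)"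

definition min_degree :: "'a set \<Rightarrow> 'a set set \<Rightarrow> nat" where
  "min_degree V E = Min ((\<lambda>v. hdeg E {v}) ` V)"

definition Gamma_hg :: "nat \<Rightarrow> 'a set \<Rightarrow> 'a set set \<Rightarrow> nat" where
  "Gamma_hg k V E = Max {card {S. card S = k - 1 \<and> S \<union> {v} \<in> E \<and> S \<union> {v'} \<in> E}
                          | v v'. v \<in> V \<and> v' \<in> V \<and> v \<noteq> v'}"

definition asymp_tree_like :: "nat \<Rightarrow> (nat \<Rightarrow> 'a set) \<Rightarrow> (nat \<Rightarrow> 'a set set) \<Rightarrow> bool" where
  "asymp_tree_like k V E \<longleftrightarrow>
     (\<forall>n. uniform_hypergraph k (V n) (E n)) \<and>
     filterlim (\<lambda>n. real (max_degree (V n) (E n))) at_top sequentially \<and>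
     (\<forall>l\<in>{2..k-1}. (\<lambda>n. real (codeg_max (V n) (E n) l)) \<in>
        o(\<lambda>n. real (max_degree (V n) (E n)) powr ((real k - real l) / (real k - 1)))) \<and>
     (\<lambda>n. real (Gamma_hg k (V n) (E n))) \<in> o(\<lambda>n. real (max_degree (V n) (E n))) \<and>
     (\<lambda>n. real (card (E n)) / real (card (V n))) \<in> \<Omega>(\<lambda>n. real (max_degree (V n) (E n)))"

definition approx_regular :: "(nat \<Rightarrow> 'a set) \<Rightarrow> (nat \<Rightarrow> 'a set set) \<Rightarrow> bool" where
  "approx_regular V E \<longleftrightarrow>
     ((\<lambda>n. real (min_degree (V n) (E n)) / real (max_degree (V n) (E n))) \<longlonglongrightarrow> 1)"

definition F_map :: "'a set \<Rightarrow> 'a set set \<Rightarrow> real \<Rightarrow> real \<Rightarrow> ('a \<Rightarrow> real) \<Rightarrow> 'a \<Rightarrow> real" where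
  "F_map V E c \<zeta> x v = c * exp (- (\<zeta> / real (max_degree V E)) *
       (\<Sum>e\<in>{e \<in> E. v \<in> e}. \<Prod>u\<in>e - {v}. x u))"

definition lambertW :: "real \<Rightarrow> real" where
  "lambertW x = (THE w. w \<ge> -1 \<and> w * exp w = x)"

end

theory Submission
  imports Defs
begin



lemma texp_le: fixes t::real shows "t * exp (-t) \<le> exp (-1)"
proof -
  have "t \<le> exp (t - 1)" using exp_ge_add_one_self[of "t-1"] by simp
  hence "t * exp (-t) \<le> exp (t-1) * exp (-t)" by (simp add: mult_right_mono)
  also have "\<dots> = exp (-1)" by (simp flip: exp_add)
  finally show ?thesis .
qed

lemma lip:
  fixes a u v :: real
  assumes "0 < u" "u \<le> v" "0 \<le> a"
  shows "a*exp(-u) - a*exp(-v) \<le> a/exp 1 * (ln v - ln u)"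
proof -
  define h where "h t = a/exp 1 * ln t + a*exp(-t)" for t
  have "h u \<le> h v"
  proof (rule DERIV_nonneg_imp_nondecreasing[OF assms(2)])
    fix t assume t: "u \<le> t" "t \<le> v"
    hence tp: "t > 0" using assms by simp
    have "DERIV h t :> a/exp 1 * (1/t) + a * (exp (-t) * (-1))"
      unfolding h_def using tp by (auto intro!: derivative_eq_intros)
    moreover have "a/exp 1 * (1/t) + a * (exp (-t) * (-1)) \<ge> 0"
    proof -
      have "t * exp (-t) \<le> 1 / exp 1" using texp_le[of t] by (simp add: exp_minus divide_inverse)
      hence "exp (-t) \<le> 1/exp 1 * (1/t)" using tp by (simp add: field_simps)
      hence "a * exp (-t) \<le> a * (1/exp 1 * (1/t))" using assms(3) by (rule mult_left_mono)
      thus ?thesis by simp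
    qed
    ultimately show "\<exists>y. DERIV h t :> y \<and> y \<ge> 0" by blast
  qed
  thus ?thesis unfolding h_def by (simp add: algebra_simps)
qed

lemma lambertW_prop:
  fixes a :: real assumes "a > 0"
  shows "lambertW a > 0 \<and> lambertW a * exp (lambertW a) = a"
proof -
  have "\<exists>w. 0 \<le> w \<and> w \<le> a \<and> w * exp w = a"
    by (rule IVT[of "\<lambda>w. w * exp w"]) (use assms in \<open>auto intro!: continuous_intros\<close>)
  then obtain w where w: "0 \<le> w" "w * exp w = a" by blast
  have pos: "w' > 0" if "w' \<ge> -1" "w' * exp w' = a" for w'
  proof (rule ccontr)
    assume "\<not> w' > 0" hence "w' * exp w' \<le> 0" by (simp add: mult_nonpos_nonneg)
    thus False using that assms by simp
  qed
  have wp: "w > 0" using pos[of w] w by simp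
  have uniq: "w' = w" if "w' \<ge> -1" "w' * exp w' = a" for w'
  proof -
    have w'p: "w' > 0" using pos that by blast
    show ?thesis
    proof (rule ccontr)
      assume "w' \<noteq> w"
      then consider "w' < w" | "w < w'" by linarith
      thus False
      proof cases
        case 1
        hence "w' * exp w' < w * exp w" using w'p
          by (intro mult_strict_mono) auto
        thus False using that w by simp
      next
        case 2
        hence "w * exp w < w' * exp w'" using wp
          by (intro mult_strict_mono) auto
        thus False using that w by simp
      qed
    qed
  qed
  have "lambertW a = w" unfolding lambertW_def
    by (rule the_equality) (use w uniq in auto)
  thus ?thesis using w wp by simp
qed




lemma pow_exp: fixes c z::real assumes "c>0" shows "(c*exp z)^K = c^K * exp (real K * z)"
  by (simp add: power_mult_distrib exp_of_nat_mult)

lemma core: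
  fixes K::nat and c \<zeta> r m M L y a :: real
  assumes K: "K \<ge> 1" and c: "c>0" and z: "\<zeta>>0" and r: "0\<le>r" "r\<le>1" and m: "0<m" "m\<le>M"
    and a: "a = real K * c^K * \<zeta>" and L: "a < L" "L < exp 1"
    and hM: "M \<le> c*exp(-(\<zeta>*r*m^K))" and hm: "c*exp(-(\<zeta>*M^K)) \<le> m"
    and y: "y = (lambertW a / (real K * \<zeta>)) powr (1/real K)"
  shows "M \<le> y*exp(exp 1*(1-r)/(1-L/exp 1)) \<and>
         y*exp(-(exp 1*(exp((1-r)*exp 1)-1)/(1-L/exp 1))) \<le> m \<and> y \<le> c"
proof -
  define w where "w = lambertW a"
  define \<kappa> where "\<kappa> = a / exp 1"
  define \<kappa>0 where "\<kappa>0 = L / exp 1"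
  have Kp: "real K > 0" using K by simp
  have ap: "a > 0" using a c z Kp by simp
  have wp: "w > 0" and we: "w * exp w = a" using lambertW_prop[OF ap] w_def by auto
  have wfix: "a * exp (-w) = w" using we by (simp add: exp_minus field_simps)
  have lnw: "ln w = ln a - w"
  proof -
    have "ln (w*exp w) = ln w + w" using wp by (simp add: ln_mult)
    thus ?thesis using we by simp
  qed
  have kk: "\<kappa> \<le> \<kappa>0" "\<kappa>0 < 1" using L unfolding \<kappa>_def \<kappa>0_def by (auto simp: divide_right_mono)
  have ae: "a \<le> exp 1" using L by simp
  have Mp: "M > 0" using m by simp
  define p where "p = real K * \<zeta> * M^K"
  define q where "q = real K * \<zeta> * m^K"
  have pp: "p > 0" and qp: "q > 0" using Kp z Mp m unfolding p_def q_def by auto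
  have qlep: "q \<le> p" unfolding p_def q_def using m Kp z by (auto intro!: mult_left_mono power_mono)
  have yK: "y ^ K = w / (real K * \<zeta>)"
  proof -
    have zp: "w / (real K * \<zeta>) > 0" using wp Kp z by simp
    have "y > 0" using zp wp Kp z unfolding y w_def by simp
    hence "y ^ K = y powr real K" by (simp add: powr_realpow)
    also have "\<dots> = w / (real K * \<zeta>)" unfolding y w_def using zp Kp wp z w_def by (simp add: powr_powr)
    finally show ?thesis .
  qed
  have yp: "y > 0" using y wp Kp z w_def by simp
  have wy: "w = real K * \<zeta> * y^K" using yK Kp z by simp
  have h1: "p \<le> a * exp (-(r*q))"
  proof -
    have "M^K \<le> (c*exp(-(\<zeta>*r*m^K)))^K" using hM Mp by (intro power_mono) auto
    also have "\<dots> = c^K * exp (real K * (-(\<zeta>*r*m^K)))" using c by (rule pow_exp)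
    also have "\<dots> = c^K * exp (-(r*(real K*\<zeta>*m^K)))" by (simp add: algebra_simps)
    finally have "real K * \<zeta> * M^K \<le> real K * \<zeta> * (c^K * exp (-(r*(real K*\<zeta>*m^K))))"
      using Kp z by (intro mult_left_mono) auto
    thus ?thesis unfolding p_def q_def a by (simp add: algebra_simps)
  qed
  have h2: "a * exp (-p) \<le> q"
  proof -
    have "c^K * exp (-(real K*\<zeta>*M^K)) = c^K * exp (real K * (-(\<zeta>*M^K)))" by (simp add: algebra_simps)
    also have "\<dots> = (c*exp(-(\<zeta>*M^K)))^K" using c by (rule pow_exp[symmetric])
    also have "\<dots> \<le> m^K" using hm c by (intro power_mono) auto
    finally have "real K * \<zeta> * (c^K * exp (-(real K*\<zeta>*M^K))) \<le> real K * \<zeta> * m^K"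
      using Kp z by (intro mult_left_mono) auto
    thus ?thesis unfolding p_def q_def a by (simp add: algebra_simps)
  qed
  have pa: "p \<le> a"
  proof -
    have "exp(-(r*q)) \<le> 1" using r qp by simp
    hence "a * exp(-(r*q)) \<le> a * 1" using ap by (intro mult_left_mono) auto
    thus ?thesis using h1 by simp
  qed
  have qa: "q \<le> a" using qlep pa by simp
  have h4: "ln p \<le> ln a - r * (a * exp (-p))"
  proof -
    have "r * (a*exp(-p)) \<le> r*q" using h2 r by (simp add: mult_left_mono)
    hence "a * exp (-(r*q)) \<le> a * exp (-(r * (a*exp(-p))))" using ap by simp
    hence "p \<le> a * exp (-(r * (a*exp(-p))))" using h1 by simp
    hence "ln p \<le> ln (a * exp (-(r * (a*exp(-p)))))" using pp by simp
    thus ?thesis using ap by (simp add: ln_mult)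
  qed
  have h5: "ln a - a * exp (-(r*q)) \<le> ln q"
  proof -
    have "a * exp (-p) \<ge> a * exp (-(a * exp (-(r*q))))" using h1 ap by simp
    hence "q \<ge> a * exp (-(a * exp (-(r*q))))" using h2 by simp
    hence "ln q \<ge> ln (a * exp (-(a * exp (-(r*q)))))" using qp ap by simp
    thus ?thesis using ap by (simp add: ln_mult)
  qed
  define A where "A = exp 1*(1-r)/(1-\<kappa>0)"
  define B where "B = exp 1*(exp((1-r)*exp 1)-1)/(1-\<kappa>0)"
  have A0: "A \<ge> 0" unfolding A_def using kk r by simp
  have B0: "B \<ge> 0" unfolding B_def using kk r by simp
  have up: "ln p - ln w \<le> A"
  proof (cases "p \<le> w")
    case True hence "ln p \<le> ln w" using pp by simp
    thus ?thesis using A0 by simp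
  next
    case False
    have "ln p - ln w \<le> (a*exp(-w) - a*exp(-p)) + (1-r)*(a*exp(-p))"
      using h4 lnw wfix by (simp add: algebra_simps)
    also have "a*exp(-w) - a*exp(-p) \<le> \<kappa>*(ln p - ln w)"
      unfolding \<kappa>_def using lip[of w p a] False wp ap by simp
    also have "(1-r)*(a*exp(-p)) \<le> (1-r)*exp 1"
    proof -
      have "a*exp(-p) \<le> a" using ap pp by simp
      thus ?thesis using ae r by (intro mult_left_mono) auto
    qed
    finally have i: "(1-\<kappa>)*(ln p - ln w) \<le> (1-r)*exp 1" by (simp add: algebra_simps)
    have "ln p - ln w \<ge> 0" using False wp by simp
    hence "(1-\<kappa>0)*(ln p - ln w) \<le> (1-\<kappa>)*(ln p - ln w)" using kk by (intro mult_right_mono) auto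
    with i have "(1-\<kappa>0)*(ln p - ln w) \<le> (1-r)*exp 1" by simp
    thus ?thesis unfolding A_def using kk by (simp add: field_simps)
  qed
  have lo: "ln w - ln q \<le> B"
  proof (cases "w \<le> q")
    case True hence "ln w \<le> ln q" using wp by simp
    thus ?thesis using B0 by simp
  next
    case False
    have e1: "a*exp(-(r*q)) = a*exp(-q) + a*exp(-q)*(exp((1-r)*q) - 1)"
      by (simp add: algebra_simps flip: exp_add)
    have "ln w - ln q \<le> (a*exp(-q) - a*exp(-w)) + a*exp(-q)*(exp((1-r)*q) - 1)"
    proof -
      have "ln w - ln q \<le> a*exp(-(r*q)) - a*exp(-w)" using h5 lnw wfix by linarith
      thus ?thesis unfolding e1 by linarith
    qed
    also have "a*exp(-q) - a*exp(-w) \<le> \<kappa>*(ln w - ln q)"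
      unfolding \<kappa>_def using lip[of q w a] False qp ap by simp
    also have "a*exp(-q)*(exp((1-r)*q) - 1) \<le> exp 1 * (exp((1-r)*exp 1) - 1)"
    proof -
      have "exp(-q) \<le> 1" using qp by simp
      hence "a*exp(-q) \<le> a * 1" using ap by (intro mult_left_mono) auto
      hence "a*exp(-q) \<le> exp 1" using ae by simp
      moreover have "0 \<le> exp((1-r)*q) - 1" using r qp by simp
      moreover have "exp((1-r)*q) - 1 \<le> exp((1-r)*exp 1) - 1"
        using r qa ae by (simp add: mult_left_mono)
      moreover have "a*exp(-q) \<ge> 0" using ap by simp
      ultimately show ?thesis by (intro mult_mono) auto
    qed
    finally have i: "(1-\<kappa>)*(ln w - ln q) \<le> exp 1 * (exp((1-r)*exp 1) - 1)" by (simp add: algebra_simps)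
    have "ln w - ln q \<ge> 0" using False qp by simp
    hence "(1-\<kappa>0)*(ln w - ln q) \<le> (1-\<kappa>)*(ln w - ln q)" using kk by (intro mult_right_mono) auto
    with i have "(1-\<kappa>0)*(ln w - ln q) \<le> exp 1 * (exp((1-r)*exp 1) - 1)" by simp
    thus ?thesis unfolding B_def using kk by (simp add: field_simps)
  qed
  have Kpos: "K > 0" using K by simp
  have M1: "M \<le> y * exp A"
  proof -
    have "ln p \<le> ln (w * exp A)" using up wp by (simp add: ln_mult)
    hence "p \<le> w * exp A" using pp wp by simp
    hence "M^K \<le> y^K * exp A" using Kp z unfolding p_def wy by (simp add: mult.assoc)
    also have "\<dots> \<le> y^K * exp (real K * A)" using A0 yp K
      by (intro mult_left_mono) (auto simp: mult_le_cancel_right1)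
    also have "\<dots> = (y * exp A)^K" by (simp add: power_mult_distrib exp_of_nat_mult)
    finally have "M^K \<le> (y * exp A)^K" .
    moreover obtain j where "K = Suc j" using Kpos gr0_implies_Suc by blast
    ultimately show ?thesis using yp by (metis power_le_imp_le_base exp_gt_zero less_imp_le mult_pos_pos)
  qed
  have m1: "y * exp (-B) \<le> m"
  proof -
    have "ln (w * exp (-B)) \<le> ln q" using lo wp by (simp add: ln_mult)
    hence "w * exp (-B) \<le> q" using qp wp by simp
    hence "y^K * exp (-B) \<le> m^K" using Kp z unfolding q_def wy by (simp add: mult.assoc)
    moreover have "y^K * exp (real K * (-B)) \<le> y^K * exp (-B)" using B0 yp K
      by (intro mult_left_mono) (auto simp: mult_le_cancel_right1)
    moreover have "y^K * exp (real K * (-B)) = (y * exp (-B))^K" by (simp only: power_mult_distrib exp_of_nat_mult)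
    ultimately have "(y * exp (-B))^K \<le> m^K" by simp
    moreover obtain j where "K = Suc j" using Kpos gr0_implies_Suc by blast
    ultimately show ?thesis using m by (metis power_le_imp_le_base less_imp_le)
  qed
  have yc: "y \<le> c"
  proof -
    have "exp(-w) < 1" using wp by simp
    hence "a*exp(-w) < a * 1" using ap by (intro mult_strict_left_mono) auto
    hence "w < a" using wfix by simp
    hence "real K * \<zeta> * y^K < real K * \<zeta> * c^K" using wy a by (simp add: algebra_simps)
    hence "y^K < c^K" using Kp z by simp
    thus ?thesis using c Kpos by (meson less_imp_le power_less_imp_less_base not_le)
  qed
  show ?thesis using M1 m1 yc unfolding A_def B_def \<kappa>0_def by simp
qed




definition beta :: "real \<Rightarrow> real \<Rightarrow> real \<Rightarrow> real" where
  "beta c L r = c*(exp(exp 1*(1-r)/(1-L/exp 1)) - 1) + c*(1 - exp(-(exp 1*(exp((1-r)*exp 1)-1)/(1-L/exp 1))))"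

lemma per_n:
  fixes V :: "'a set" and E :: "'a set set" and k :: nat and c \<zeta> L :: real and x :: "'a \<Rightarrow> real"
  assumes H: "uniform_hypergraph k V E" and k: "k \<ge> 2" and c: "c > 0" and z: "\<zeta> > 0"
    and D: "max_degree V E > 0" and v0: "v0 \<in> V"
    and aL: "real (k-1) * c^(k-1) * \<zeta> < L" and L: "L < exp 1"
    and fx: "\<And>v. v \<in> V \<Longrightarrow> x v = F_map V E c \<zeta> x v"
  shows "\<forall>v\<in>V. \<bar>x v - (lambertW (real (k - 1) * c ^ (k - 1) * \<zeta>) / (real (k - 1) * \<zeta>))
                           powr (1 / real (k - 1))\<bar> \<le> beta c L (real (min_degree V E) / real (max_degree V E))"
proof -
  define K where "K = k - 1"
  define \<Delta> where "\<Delta> = max_degree V E"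
  define \<delta> where "\<delta> = min_degree V E"
  define r where "r = real \<delta> / real \<Delta>"
  define y where "y = (lambertW (real K * c ^ K * \<zeta>) / (real K * \<zeta>)) powr (1 / real K)"
  have K1: "K \<ge> 1" using k unfolding K_def by simp
  have fin: "finite V" using H unfolding uniform_hypergraph_def by simp
  have Ee: "\<And>e. e \<in> E \<Longrightarrow> e \<subseteq> V \<and> card e = k" using H unfolding uniform_hypergraph_def by simp
  have dle: "hdeg E {v} \<le> \<Delta>" if "v \<in> V" for v
    unfolding \<Delta>_def max_degree_def using fin that by (intro Max_ge) auto
  have dge: "\<delta> \<le> hdeg E {v}" if "v \<in> V" for v
    unfolding \<delta>_def min_degree_def using fin that by (intro Min_le) auto
  have Dp: "real \<Delta> > 0" using D \<Delta>_def by simp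
  have r0: "0 \<le> r" "r \<le> 1" unfolding r_def using Dp dge[OF v0] dle[OF v0] by auto
  have hd: "hdeg E {v} = card {e \<in> E. v \<in> e}" for v unfolding hdeg_def by simp
  define S where "S v = (\<Sum>e\<in>{e \<in> E. v \<in> e}. \<Prod>u\<in>e - {v}. x u)" for v
  have xeq: "x v = c * exp (- (\<zeta> / real \<Delta>) * S v)" if "v \<in> V" for v
    using fx[OF that] unfolding F_map_def S_def \<Delta>_def by simp
  have xpos: "x v > 0" if "v \<in> V" for v using xeq[OF that] c by simp
  define M where "M = Max (x ` V)"
  define m where "m = Min (x ` V)"
  have Min: "M \<in> x ` V" "m \<in> x ` V" unfolding M_def m_def using fin v0 by (auto intro!: Max_in Min_in)
  have mle: "m \<le> x v" "x v \<le> M" if "v \<in> V" for v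
    unfolding M_def m_def using fin that by auto
  have mp: "m > 0" using Min(2) xpos by auto
  have mM: "m \<le> M" using mle[OF v0] by simp
  have prodb: "m^K \<le> (\<Prod>u\<in>e - {v}. x u) \<and> (\<Prod>u\<in>e - {v}. x u) \<le> M^K" if "e \<in> E" "v \<in> e" for e v
  proof -
    have sub: "e - {v} \<subseteq> V" using Ee[OF that(1)] by auto
    have fe: "finite e" using Ee[OF that(1)] fin finite_subset by blast
    have ce: "card (e - {v}) = K" using Ee[OF that(1)] that(2) fe unfolding K_def by simp
    have "(\<Prod>u\<in>e - {v}. m) \<le> (\<Prod>u\<in>e - {v}. x u)"
      using sub mp mle by (intro prod_mono) (auto simp: less_imp_le)
    moreover have "(\<Prod>u\<in>e - {v}. x u) \<le> (\<Prod>u\<in>e - {v}. M)"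
      using sub xpos mle by (intro prod_mono) (auto simp: less_imp_le)
    ultimately show ?thesis using ce by simp
  qed
  have Sb: "real \<delta> * m^K \<le> S v \<and> S v \<le> real \<Delta> * M^K" if "v \<in> V" for v
  proof -
    have "real (card {e \<in> E. v \<in> e}) * m^K \<le> S v" unfolding S_def
      using prodb by (intro sum_bounded_below) auto
    moreover have "S v \<le> real (card {e \<in> E. v \<in> e}) * M^K" unfolding S_def
      using prodb by (intro sum_bounded_above) auto
    moreover have "real \<delta> * m^K \<le> real (card {e \<in> E. v \<in> e}) * m^K"
      using dge[OF that] mp unfolding hd by (intro mult_right_mono) auto
    moreover have "real (card {e \<in> E. v \<in> e}) * M^K \<le> real \<Delta> * M^K"
      using dle[OF that] mp mM unfolding hd by (intro mult_right_mono) auto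
    ultimately show ?thesis by linarith
  qed
  have up: "x v \<le> c*exp(-(\<zeta>*r*m^K))" if "v \<in> V" for v
  proof -
    have "\<zeta>/real \<Delta> * (real \<delta> * m^K) \<le> \<zeta>/real \<Delta> * S v"
      using Sb[OF that] z Dp by (intro mult_left_mono) auto
    moreover have "\<zeta>/real \<Delta> * (real \<delta> * m^K) = \<zeta>*r*m^K" unfolding r_def by simp
    ultimately show ?thesis using xeq[OF that] c by simp
  qed
  have lo: "c*exp(-(\<zeta>*M^K)) \<le> x v" if "v \<in> V" for v
  proof -
    have "\<zeta>/real \<Delta> * S v \<le> \<zeta>/real \<Delta> * (real \<Delta> * M^K)"
      using Sb[OF that] z Dp by (intro mult_left_mono) auto
    moreover have "\<zeta>/real \<Delta> * (real \<Delta> * M^K) = \<zeta>*M^K" using Dp by simp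
    ultimately show ?thesis using xeq[OF that] c by simp
  qed
  have hM: "M \<le> c*exp(-(\<zeta>*r*m^K))" using Min(1) up by auto
  have hm: "c*exp(-(\<zeta>*M^K)) \<le> m" using Min(2) lo by auto
  have core': "M \<le> y*exp(exp 1*(1-r)/(1-L/exp 1)) \<and>
         y*exp(-(exp 1*(exp((1-r)*exp 1)-1)/(1-L/exp 1))) \<le> m \<and> y \<le> c"
    by (rule core[OF K1 c z r0 mp mM refl _ L hM hm]) (use aL y_def K_def in auto)
  define A where "A = exp 1*(1-r)/(1-L/exp 1)"
  define B where "B = exp 1*(exp((1-r)*exp 1)-1)/(1-L/exp 1)"
  have A0: "A \<ge> 0" unfolding A_def using r0 L by simp
  have B0: "B \<ge> 0" unfolding B_def using r0 L by simp
  have yp: "y \<ge> 0" unfolding y_def by simp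
  have bd: "\<bar>x v - y\<bar> \<le> beta c L r" if "v \<in> V" for v
  proof -
    have t1: "x v - y \<le> c*(exp A - 1)"
    proof -
      have "x v - y \<le> y*(exp A - 1)" using mle[OF that] core' unfolding A_def by (simp add: algebra_simps)
      also have "\<dots> \<le> c*(exp A - 1)" using core' A0 by (intro mult_right_mono) auto
      finally show ?thesis .
    qed
    have t2: "y - x v \<le> c*(1 - exp(-B))"
    proof -
      have "y - x v \<le> y*(1 - exp(-B))" using mle[OF that] core' unfolding B_def by (simp add: algebra_simps)
      also have "\<dots> \<le> c*(1 - exp(-B))" using core' B0 by (intro mult_right_mono) auto
      finally show ?thesis .
    qed
    have "c*(exp A - 1) \<ge> 0" "c*(1 - exp(-B)) \<ge> 0" using A0 B0 c by auto
    thus ?thesis using t1 t2 unfolding beta_def A_def[symmetric] B_def[symmetric] by linarith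
  qed
  show ?thesis using bd unfolding y_def K_def r_def \<delta>_def \<Delta>_def by simp
qed




theorem mainTheorem13:
  fixes k :: nat and c :: real and \<zeta> :: "nat \<Rightarrow> real"
    and V :: "nat \<Rightarrow> 'a set" and E :: "nat \<Rightarrow> 'a set set"
    and xstar :: "nat \<Rightarrow> 'a \<Rightarrow> real"
  assumes "k \<ge> 2" and "c > 0"
    and "\<And>n. 0 < \<zeta> n \<and> \<zeta> n \<le> 1"
    and "limsup (\<lambda>n. ereal (\<zeta> n * real (k - 1) * c ^ (k - 1))) < ereal (exp 1)"
    and "asymp_tree_like k V E" and "approx_regular V E"
    and "\<And>n v. v \<in> V n \<Longrightarrow> xstar n v = F_map (V n) (E n) c (\<zeta> n) (xstar n) v"
  shows "\<forall>\<epsilon>>0. \<forall>\<^sub>F n in sequentially. \<forall>v\<in>V n.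
           \<bar>xstar n v - (lambertW (real (k - 1) * c ^ (k - 1) * \<zeta> n) / (real (k - 1) * \<zeta> n))
                           powr (1 / real (k - 1))\<bar> < \<epsilon>"
proof (intro allI impI)
  fix \<epsilon> :: real assume ep: "\<epsilon> > 0"
  obtain L where L1: "limsup (\<lambda>n. ereal (\<zeta> n * real (k - 1) * c ^ (k - 1))) < ereal L"
    and L2: "ereal L < ereal (exp 1)" using ereal_dense2[OF assms(4)] by blast
  have Le: "L < exp 1" using L2 by simp
  have ev1: "\<forall>\<^sub>F n in sequentially. real (k - 1) * c ^ (k - 1) * \<zeta> n < L"
    using Limsup_lessD[OF L1] by (rule eventually_mono) (simp add: algebra_simps)
  have lim: "filterlim (\<lambda>n. real (max_degree (V n) (E n))) at_top sequentially"
    and unif: "\<And>n. uniform_hypergraph k (V n) (E n)"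
    using assms(5) unfolding asymp_tree_like_def by auto
  have ev2: "\<forall>\<^sub>F n in sequentially. 1 \<le> real (max_degree (V n) (E n))"
    using lim unfolding filterlim_at_top by blast
  have rlim: "(\<lambda>n. real (min_degree (V n) (E n)) / real (max_degree (V n) (E n))) \<longlonglongrightarrow> 1"
    using assms(6) unfolding approx_regular_def by simp
  have "(\<lambda>n. beta c L (real (min_degree (V n) (E n)) / real (max_degree (V n) (E n)))) \<longlonglongrightarrow> beta c L 1"
    using Le unfolding beta_def by (intro tendsto_intros rlim) auto
  moreover have "beta c L 1 = 0" unfolding beta_def by simp
  ultimately have ev3: "\<forall>\<^sub>F n in sequentially.
      beta c L (real (min_degree (V n) (E n)) / real (max_degree (V n) (E n))) < \<epsilon>"
    using ep by (metis order_tendstoD(2))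
  show "\<forall>\<^sub>F n in sequentially. \<forall>v\<in>V n.
           \<bar>xstar n v - (lambertW (real (k - 1) * c ^ (k - 1) * \<zeta> n) / (real (k - 1) * \<zeta> n))
                           powr (1 / real (k - 1))\<bar> < \<epsilon>"
    using ev1 ev2 ev3
  proof eventually_elim
    case (elim n)
    show ?case
    proof
      fix v assume v: "v \<in> V n"
      have "\<forall>v\<in>V n. \<bar>xstar n v - (lambertW (real (k - 1) * c ^ (k - 1) * \<zeta> n) / (real (k - 1) * \<zeta> n))
                           powr (1 / real (k - 1))\<bar> \<le> beta c L (real (min_degree (V n) (E n)) / real (max_degree (V n) (E n)))"
        by (rule per_n[OF unif assms(1,2) _ _ v elim(1) Le assms(7)])
           (use assms(3)[of n] elim(2) in auto)
      thus "\<bar>xstar n v - (lambertW (real (k - 1) * c ^ (k - 1) * \<zeta> n) / (real (k - 1) * \<zeta> n))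
                           powr (1 / real (k - 1))\<bar> < \<epsilon>" using v elim(3) by fastforce
    qed
  qed
qed


end
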